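(* Let $f_1,f_2:\mathbb R^d\to\mathbb R$ be convex with $\nabla f_i$ globally Lipschitz continuous with modulus $L_i>0$ ($i=1,2$), let $f_3:\mathbb R^d\to\mathbb R\cup\{+\infty\}$ be proper and lower semicontinuous, and assume $\varphi:=f_1+f_2+f_3$ has a nonempty set of minimizers. Let $\alpha>0$ and $\gamma\in(0,\frac{1}{L_1+L_2})$. Then the relaxed Ryu envelope $\varphi_\gamma^{\mathrm{Ryu}}:\mathbb R^d\times\mathbb R^d\to\mathbb R\cup\{\pm\infty\}$ is real-valued and locally Lipschitz continuous.
   Context: For $h:\mathbb R^d\to\mathbb R\cup\{+\infty\}$ and $\gamma>0$, $\mathrm{prox}_{\gamma h}(z):=\operatorname{argmin}_{y}\{h(y)+\frac{1}{2\gamma}\|y-z\|^2\}$. Set $\gamma_1=\gamma/\alpha$, $\gamma_2=\gamma/(1-\alpha)$, with conventions $\frac{c}{0}=\infty$, $\frac{d}{\infty}=0$ ($c>0,d\in\mathbb R$). For $(z_1,z_2)\in\mathbb R^d\times\mathbb R^d$, let $x_1=\mathrm{prox}_{\gamma f_1}(z_1)$ and $x_2=\mathrm{prox}_{\frac{\gamma}{\alpha}f_2}(\frac{z_2}{\alpha}+x_1)$, and define the relaxed Ryu envelope $$\varphi_\gamma^{\mathrm{Ryu}}(z_1,z_2):=\min_{y\in\mathbb R^d}\Big\{f_3(y)+\sum_{i=1}^2\Big[f_i(x_i)+\langle y-x_i,\nabla f_i(x_i)\rangle+\frac{1}{2\gamma_i}\|y-x_i\|^2\Big]\Big\}.$$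 *)

theory Defs
  imports "HOL-Analysis.Analysis"
begin

definition lsc_ereal :: "('a::topological_space \<Rightarrow> ereal) \<Rightarrow> bool" where
  "lsc_ereal f \<longleftrightarrow> (\<forall>x. \<forall>c. c < f x \<longrightarrow> (\<forall>\<^sub>F y in at x. c < f y))"

definition proper_ereal :: "('a \<Rightarrow> ereal) \<Rightarrow> bool" where
  "proper_ereal f \<longleftrightarrow> (\<forall>x. f x \<noteq> -\<infinity>) \<and> (\<exists>x. f x \<noteq> \<infinity>)"

definition prox :: "real \<Rightarrow> ('a::real_normed_vector \<Rightarrow> real) \<Rightarrow> 'a \<Rightarrow> 'a" where
  "prox \<gamma> h z = (THE x. \<forall>y. h x + (norm (x - z))\<^sup>2 / (2 * \<gamma>) \<le> h y + (norm (y - z))\<^sup>2 / (2 * \<gamma>))"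

text \<open>Relaxed Ryu envelope.  g1, g2 are the gradients of f1, f2.
  The coefficients 1/(2 gamma_1) = alpha/(2 gamma) and 1/(2 gamma_2) = (1-alpha)/(2 gamma)
  are written out (this realizes the conventions c/0 = inf, d/inf = 0).
  The "min" is taken as an infimum in the extended reals.\<close>
definition ryu_envelope ::
  "('a::real_inner \<Rightarrow> real) \<Rightarrow> ('a \<Rightarrow> 'a) \<Rightarrow> ('a \<Rightarrow> real) \<Rightarrow> ('a \<Rightarrow> 'a) \<Rightarrow> ('a \<Rightarrow> ereal)
   \<Rightarrow> real \<Rightarrow> real \<Rightarrow> 'a \<Rightarrow> 'a \<Rightarrow> ereal" where
  "ryu_envelope f1 g1 f2 g2 f3 \<alpha> \<gamma> z1 z2 =
    (let x1 = prox \<gamma> f1 z1;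
         x2 = prox (\<gamma> / \<alpha>) f2 (z2 /\<^sub>R \<alpha> + x1)
     in (INF y. f3 y
           + ereal (f1 x1 + inner (y - x1) (g1 x1) + \<alpha> / (2 * \<gamma>) * (norm (y - x1))\<^sup>2)
           + ereal (f2 x2 + inner (y - x2) (g2 x2) + (1 - \<alpha>) / (2 * \<gamma>) * (norm (y - x2))\<^sup>2)))"

definition locally_lipschitz :: "('a::metric_space \<Rightarrow> 'b::metric_space) \<Rightarrow> bool" where
  "locally_lipschitz F \<longleftrightarrow> (\<forall>z. \<exists>e>0. \<exists>L. L-lipschitz_on (ball z e) F)"

end

theory Submission
  imports Defs
begin


lemma tangent_ineq:
  fixes f :: "'a::real_inner \<Rightarrow> real"
  assumes cvx: "convex_on UNIV f"
    and der: "\<And>x. (f has_derivative (\<lambda>h. inner (g x) h)) (at x)"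
  shows "f x + inner (g x) (y - x) \<le> f y"
proof -
  define \<phi> where "\<phi> t = f ((1 - t) *\<^sub>R x + t *\<^sub>R y)" for t :: real
  have c: "convex_on UNIV \<phi>"
  proof (rule convex_onI)
    fix s a b :: real assume "0 < s" "s < 1"
    have e: "(1 - ((1 - s) * a + s * b)) *\<^sub>R x + ((1 - s) * a + s * b) *\<^sub>R y
      = (1 - s) *\<^sub>R ((1 - a) *\<^sub>R x + a *\<^sub>R y) + s *\<^sub>R ((1 - b) *\<^sub>R x + b *\<^sub>R y)"
      by (simp add: algebra_simps)
    show "\<phi> ((1 - s) *\<^sub>R a + s *\<^sub>R b) \<le> (1 - s) * \<phi> a + s * \<phi> b"
      unfolding \<phi>_def using e convex_onD[OF cvx, of s] \<open>0 < s\<close> \<open>s < 1\<close> by simp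
  qed simp
  have "((\<lambda>t. (1 - t) *\<^sub>R x + t *\<^sub>R y) has_derivative (\<lambda>t. t *\<^sub>R (y - x))) (at 0)"
    by (auto intro!: derivative_eq_intros simp: algebra_simps)
  from has_derivative_compose[OF this der]
  have "(\<phi> has_derivative (\<lambda>t. inner (g x) (t *\<^sub>R (y - x)))) (at 0)"
    unfolding \<phi>_def by simp
  then have "(\<phi> has_field_derivative inner (g x) (y - x)) (at 0)"
    by (simp add: has_field_derivative_def mult_commute_abs)
  then have "\<phi> 1 - \<phi> 0 \<ge> inner (g x) (y - x) * (1 - 0)"
    by (intro convex_on_imp_above_tangent[OF c]) auto
  then show ?thesis unfolding \<phi>_def by simp
qed

lemma descent_ineq:
  fixes f :: "'a::real_inner \<Rightarrow> real"
  assumes der: "\<And>x. (f has_derivative (\<lambda>h. inner (g x) h)) (at x)"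
    and lip: "L-lipschitz_on UNIV g"
  shows "f y \<le> f x + inner (g x) (y - x) + L / 2 * (norm (y - x))\<^sup>2"
proof -
  define d where "d = y - x"
  define \<psi> where "\<psi> t = f (x + t *\<^sub>R d) - t * inner (g x) d - L * t\<^sup>2 / 2 * (norm d)\<^sup>2" for t :: real
  have key: "\<exists>y. DERIV \<psi> t :> y \<and> y \<le> 0" if t: "0 \<le> t" "t \<le> 1" for t :: real
  proof -
    have "((\<lambda>t. x + t *\<^sub>R d) has_derivative (\<lambda>s. s *\<^sub>R d)) (at t)"
      by (auto intro!: derivative_eq_intros)
    then have "((\<lambda>t. f (x + t *\<^sub>R d)) has_derivative (\<lambda>s. inner (g (x + t *\<^sub>R d)) (s *\<^sub>R d))) (at t)"
      using has_derivative_compose[OF _ der] by blast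
    then have D1: "((\<lambda>t. f (x + t *\<^sub>R d)) has_field_derivative inner (g (x + t *\<^sub>R d)) d) (at t)"
      by (simp add: has_field_derivative_def mult_commute_abs)
    have D: "(\<psi> has_field_derivative (inner (g (x + t *\<^sub>R d)) d - inner (g x) d - L * t * (norm d)\<^sup>2)) (at t)"
      unfolding \<psi>_def
      by (rule derivative_eq_intros D1 refl | simp)+
    have nb: "norm (g (x + t *\<^sub>R d) - g x) \<le> L * norm (t *\<^sub>R d)"
      using lip unfolding lipschitz_on_def dist_norm by (metis UNIV_I add_diff_cancel_left')
    have "inner (g (x + t *\<^sub>R d)) d - inner (g x) d = inner (g (x + t *\<^sub>R d) - g x) d"
      by (simp add: inner_diff_left)
    also have "\<dots> \<le> norm (g (x + t *\<^sub>R d) - g x) * norm d" by (rule norm_cauchy_schwarz)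
    also have "\<dots> \<le> L * norm (t *\<^sub>R d) * norm d"
      using nb by (simp add: mult_right_mono)
    also have "\<dots> = L * t * (norm d)\<^sup>2" using t by (simp add: power2_eq_square)
    finally show ?thesis using D by auto
  qed
  have "\<psi> 1 \<le> \<psi> 0"
    by (rule DERIV_nonpos_imp_nonincreasing[OF _ key]) auto
  then show ?thesis unfolding \<psi>_def d_def by (simp add: algebra_simps)
qed



lemma quad_big:
  fixes t \<delta> P Q :: real
  assumes "1 \<le> t" "\<delta> * t \<ge> P + Q" "Q \<ge> 0"
  shows "\<delta> * t\<^sup>2 - P * t \<ge> Q"
proof -
  have "\<delta> * t\<^sup>2 - P * t = t * (\<delta> * t - P)" by (simp add: power2_eq_square algebra_simps)
  also have "\<dots> \<ge> t * Q" using assms by (intro mult_left_mono) auto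
  finally show ?thesis using assms by (smt (verit) mult_right_mono mult_cancel_right1)
qed

lemma grad_monotone:
  fixes f :: "'a::real_inner \<Rightarrow> real"
  assumes cvx: "convex_on UNIV f"
    and der: "\<And>x. (f has_derivative (\<lambda>h. inner (g x) h)) (at x)"
  shows "inner (g x - g y) (x - y) \<ge> 0"
proof -
  have "f x + inner (g x) (y - x) \<le> f y" "f y + inner (g y) (x - y) \<le> f x"
    using tangent_ineq[OF cvx der] by blast+
  then show ?thesis by (simp add: inner_diff_left inner_diff_right inner_commute algebra_simps)
qed

lemma stationary_eq:
  fixes f :: "'a::real_inner \<Rightarrow> real"
  assumes cvx: "convex_on UNIV f"
    and der: "\<And>x. (f has_derivative (\<lambda>h. inner (g x) h)) (at x)"
    and "\<gamma> > 0"
    and p: "p + \<gamma> *\<^sub>R g p = z" and q: "q + \<gamma> *\<^sub>R g q = z'"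
  shows "norm (p - q) \<le> norm (z - z')"
proof -
  have m: "inner (g p - g q) (p - q) \<ge> 0" by (rule grad_monotone[OF cvx der])
  have "inner (z - z') (p - q) = inner (p - q) (p - q) + \<gamma> * inner (g p - g q) (p - q)"
    using p q by (auto simp: algebra_simps inner_diff_left inner_diff_right inner_add_left)
  also have "\<dots> \<ge> (norm (p - q))\<^sup>2" using m \<open>\<gamma> > 0\<close> by (simp add: power2_norm_eq_inner)
  finally have "(norm (p - q))\<^sup>2 \<le> norm (z - z') * norm (p - q)"
    using norm_cauchy_schwarz[of "z - z'" "p - q"] by linarith
  then show ?thesis
    by (cases "norm (p - q) = 0") (auto simp: power2_eq_square)
qed

lemma prox_exists_min:
  fixes f :: "'a::euclidean_space \<Rightarrow> real"
  assumes cvx: "convex_on UNIV f"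
    and der: "\<And>x. (f has_derivative (\<lambda>h. inner (g x) h)) (at x)"
    and "\<gamma> > 0"
  shows "\<exists>p. \<forall>y. f p + (norm (p - z))\<^sup>2 / (2 * \<gamma>) \<le> f y + (norm (y - z))\<^sup>2 / (2 * \<gamma>)"
proof -
  define \<phi> where "\<phi> y = f y + (norm (y - z))\<^sup>2 / (2 * \<gamma>)" for y
  have contf: "continuous_on UNIV f"
    using der has_derivative_continuous continuous_at_imp_continuous_on by blast
  have cont: "continuous_on S \<phi>" for S
    unfolding \<phi>_def using \<open>\<gamma> > 0\<close> by (intro continuous_intros continuous_on_subset[OF contf]) auto
  define A where "A = f 0 - (norm z)\<^sup>2 / (2 * \<gamma>) - \<phi> 0"
  define r where "r = max 1 (4 * \<gamma> * (norm (g 0) + \<bar>A\<bar> + 1))"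
  have far: "\<phi> y > \<phi> 0" if "norm y > r" for y
  proof -
    let ?t = "norm y"
    have t1: "1 \<le> ?t" using that unfolding r_def by linarith
    have "4 * \<gamma> * (norm (g 0) + \<bar>A\<bar> + 1) \<le> ?t" using that unfolding r_def by linarith
    then have "1 / (4 * \<gamma>) * ?t \<ge> norm (g 0) + (\<bar>A\<bar> + 1)"
      using \<open>\<gamma> > 0\<close> by (simp add: field_simps)
    from quad_big[OF t1 this] have q: "1 / (4 * \<gamma>) * ?t\<^sup>2 - norm (g 0) * ?t \<ge> \<bar>A\<bar> + 1" by simp
    have "f 0 + inner (g 0) (y - 0) \<le> f y" by (rule tangent_ineq[OF cvx der])
    moreover have "inner (g 0) y \<ge> - (norm (g 0) * ?t)"
      using norm_cauchy_schwarz[of "g 0" "- y"] by simp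
    moreover have "(norm y)\<^sup>2 \<le> 2 * (norm (y - z))\<^sup>2 + 2 * (norm z)\<^sup>2"
    proof -
      have "norm y \<le> norm (y - z) + norm z" by (metis norm_triangle_sub add.commute)
      then have "(norm y)\<^sup>2 \<le> (norm (y - z) + norm z)\<^sup>2"
        by (simp add: power_mono)
      also have "\<dots> \<le> 2 * (norm (y - z))\<^sup>2 + 2 * (norm z)\<^sup>2"
        by (smt (verit) sum_squares_bound power2_sum)
      finally show ?thesis .
    qed
    then have "(norm (y - z))\<^sup>2 / (2 * \<gamma>) \<ge> ((norm y)\<^sup>2 / 2 - (norm z)\<^sup>2) / (2 * \<gamma>)"
      using \<open>\<gamma> > 0\<close> by (intro divide_right_mono) auto
    ultimately have "\<phi> y \<ge> f 0 - norm (g 0) * ?t + ((norm y)\<^sup>2 / 2 - (norm z)\<^sup>2) / (2 * \<gamma>)"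
      unfolding \<phi>_def by simp
    also have "f 0 - norm (g 0) * ?t + ((norm y)\<^sup>2 / 2 - (norm z)\<^sup>2) / (2 * \<gamma>)
       = (1 / (4 * \<gamma>) * ?t\<^sup>2 - norm (g 0) * ?t) + (A + \<phi> 0)"
      unfolding A_def using \<open>\<gamma> > 0\<close> by (simp add: field_simps)
    finally show ?thesis using q by linarith
  qed
  obtain p where p: "p \<in> cball 0 r" "\<forall>y\<in>cball 0 r. \<phi> p \<le> \<phi> y"
    using continuous_attains_inf[OF compact_cball _ cont, of 0 r] unfolding r_def by force
  have "\<phi> p \<le> \<phi> y" for y
  proof (cases "norm y \<le> r")
    case True then show ?thesis using p by auto
  next
    case False
    then have "\<phi> y > \<phi> 0" using far by auto
    moreover have "\<phi> p \<le> \<phi> 0" using p unfolding r_def by auto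
    ultimately show ?thesis by simp
  qed
  then show ?thesis unfolding \<phi>_def by blast
qed

lemma min_stationary:
  fixes f :: "'a::real_inner \<Rightarrow> real"
  assumes der: "\<And>x. (f has_derivative (\<lambda>h. inner (g x) h)) (at x)"
    and "\<gamma> > 0"
    and min: "\<forall>y. f p + (norm (p - z))\<^sup>2 / (2 * \<gamma>) \<le> f y + (norm (y - z))\<^sup>2 / (2 * \<gamma>)"
  shows "p + \<gamma> *\<^sub>R g p = z"
proof -
  define w where "w = g p + (1 / \<gamma>) *\<^sub>R (p - z)"
  define c where "c = 1 / (2 * \<gamma>)"
  have "((\<lambda>y. f y + c * inner (y - z) (y - z)) has_derivative
      (\<lambda>h. inner (g p) h + c * (inner h (p - z) + inner (p - z) h))) (at p)"
    by (auto intro!: derivative_eq_intros der)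
  moreover have "eventually (\<lambda>y. f p + c * inner (p - z) (p - z) \<le> f y + c * inner (y - z) (y - z)) (at p)"
    using min by (simp add: power2_norm_eq_inner c_def)
  ultimately have "(\<lambda>h. inner (g p) h + c * (inner h (p - z) + inner (p - z) h)) = (\<lambda>h. 0)"
    by (rule has_derivative_local_min)
  then have "inner (g p) w + (inner w (p - z) + inner (p - z) w) / (2 * \<gamma>) = 0"
    unfolding c_def by (metis times_divide_eq_left mult_1)
  moreover have "inner w (p - z) = inner (p - z) w" by (rule inner_commute)
  ultimately have e1: "inner (g p) w + (1 / \<gamma>) * inner (p - z) w = 0"
    using \<open>\<gamma> > 0\<close> by (simp add: field_simps)
  have "inner w w = inner (g p) w + (1 / \<gamma>) * inner (p - z) w"
    by (subst (1) w_def) (simp add: inner_add_left)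
  then have "inner w w = 0" using e1 by simp
  then have "w = 0" by simp
  moreover have "\<gamma> *\<^sub>R w = \<gamma> *\<^sub>R g p + (p - z)"
    unfolding w_def using \<open>\<gamma> > 0\<close> by (simp add: scaleR_add_right)
  ultimately have "\<gamma> *\<^sub>R g p + (p - z) = 0" by simp
  then show ?thesis by (simp add: algebra_simps)
qed

lemma prox_stationary:
  fixes f :: "'a::euclidean_space \<Rightarrow> real"
  assumes cvx: "convex_on UNIV f"
    and der: "\<And>x. (f has_derivative (\<lambda>h. inner (g x) h)) (at x)"
    and "\<gamma> > 0"
  shows "prox \<gamma> f z + \<gamma> *\<^sub>R g (prox \<gamma> f z) = z"
proof -
  obtain p where p: "\<forall>y. f p + (norm (p - z))\<^sup>2 / (2 * \<gamma>) \<le> f y + (norm (y - z))\<^sup>2 / (2 * \<gamma>)"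
    using prox_exists_min[OF cvx der \<open>\<gamma> > 0\<close>] by blast
  have ps: "p + \<gamma> *\<^sub>R g p = z" by (rule min_stationary[OF der \<open>\<gamma> > 0\<close> p])
  have "prox \<gamma> f z = p"
    unfolding prox_def
  proof (rule the_equality)
    fix x assume "\<forall>y. f x + (norm (x - z))\<^sup>2 / (2 * \<gamma>) \<le> f y + (norm (y - z))\<^sup>2 / (2 * \<gamma>)"
    then have "x + \<gamma> *\<^sub>R g x = z" by (rule min_stationary[OF der \<open>\<gamma> > 0\<close>])
    then have "norm (x - p) \<le> norm (z - z)" by (rule stationary_eq[OF cvx der \<open>\<gamma> > 0\<close> _ ps])
    then show "x = p" by simp
  qed (rule p)
  then show ?thesis using ps by simp
qed

lemma prox_nonexp:
  fixes f :: "'a::euclidean_space \<Rightarrow> real"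
  assumes cvx: "convex_on UNIV f"
    and der: "\<And>x. (f has_derivative (\<lambda>h. inner (g x) h)) (at x)"
    and "\<gamma> > 0"
  shows "norm (prox \<gamma> f z - prox \<gamma> f z') \<le> norm (z - z')"
  by (rule stationary_eq[OF cvx der \<open>\<gamma> > 0\<close> prox_stationary[OF assms] prox_stationary[OF assms]])



definition lipb :: "('a::real_normed_vector \<Rightarrow> 'b::real_normed_vector) \<Rightarrow> bool" where
  "lipb F \<longleftrightarrow> (\<forall>R. \<exists>K. \<forall>x y. norm x \<le> R \<longrightarrow> norm y \<le> R \<longrightarrow> norm (F x - F y) \<le> K * norm (x - y))"

lemma lipbD:
  assumes "lipb F"
  obtains K where "K \<ge> 0" "\<And>x y. norm x \<le> R \<Longrightarrow> norm y \<le> R \<Longrightarrow> norm (F x - F y) \<le> K * norm (x - y)"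
proof -
  obtain K where K: "\<And>x y. norm x \<le> R \<Longrightarrow> norm y \<le> R \<Longrightarrow> norm (F x - F y) \<le> K * norm (x - y)"
    using assms unfolding lipb_def by blast
  have "norm (F x - F y) \<le> max K 0 * norm (x - y)" if "norm x \<le> R" "norm y \<le> R" for x y
    using K[OF that] by (smt (verit) mult_right_mono norm_ge_zero)
  then show ?thesis using that[of "max K 0"] by auto
qed

lemma lipb_bnd:
  assumes "lipb F"
  obtains M where "\<And>x. norm x \<le> R \<Longrightarrow> norm (F x) \<le> M"
proof (cases "R \<ge> 0")
  case True
  obtain K where K: "K \<ge> 0" "\<And>x y. norm x \<le> R \<Longrightarrow> norm y \<le> R \<Longrightarrow> norm (F x - F y) \<le> K * norm (x - y)"
    using lipbD[OF assms] by blast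
  have "norm (F x) \<le> norm (F 0) + K * R" if "norm x \<le> R" for x
  proof -
    have "norm (F x - F 0) \<le> K * norm (x - 0)" using K(2)[of x 0] that True by simp
    also have "\<dots> \<le> K * R" using that K(1) by (simp add: mult_left_mono)
    finally show ?thesis by (smt (verit) norm_triangle_sub)
  qed
  then show ?thesis using that by blast
next
  case False
  then show ?thesis using that[of 0] by (smt (verit) norm_ge_zero)
qed

lemma lipb_const: "lipb (\<lambda>x. c)"
  unfolding lipb_def by (auto intro: exI[of _ 0])

lemma lipb_id: "lipb (\<lambda>x. x)"
  unfolding lipb_def by (auto intro: exI[of _ 1])

lemma lipb_fst: "lipb fst"
  unfolding lipb_def by (auto intro!: exI[of _ 1] simp: fst_diff[symmetric] norm_fst_le simp del: fst_diff)

lemma lipb_snd: "lipb snd"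
  unfolding lipb_def by (auto intro!: exI[of _ 1] simp: snd_diff[symmetric] norm_snd_le simp del: snd_diff)

lemma lipb_lipschitz:
  assumes "L-lipschitz_on UNIV F"
  shows "lipb F"
  using assms unfolding lipb_def lipschitz_on_def dist_norm by blast

lemma lipb_add:
  assumes "lipb F" "lipb G"
  shows "lipb (\<lambda>x. F x + G x)"
  unfolding lipb_def
proof
  fix R
  obtain K1 where K1: "\<And>x y. norm x \<le> R \<Longrightarrow> norm y \<le> R \<Longrightarrow> norm (F x - F y) \<le> K1 * norm (x - y)"
    using lipbD[OF assms(1)] by blast
  obtain K2 where K2: "\<And>x y. norm x \<le> R \<Longrightarrow> norm y \<le> R \<Longrightarrow> norm (G x - G y) \<le> K2 * norm (x - y)"
    using lipbD[OF assms(2)] by blast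
  have "norm (F x + G x - (F y + G y)) \<le> (K1 + K2) * norm (x - y)" if "norm x \<le> R" "norm y \<le> R" for x y
  proof -
    have "norm (F x + G x - (F y + G y)) \<le> norm (F x - F y) + norm (G x - G y)"
      by (metis add_diff_add norm_triangle_ineq)
    then show ?thesis using K1[OF that] K2[OF that] by (simp add: algebra_simps)
  qed
  then show "\<exists>K. \<forall>x y. norm x \<le> R \<longrightarrow> norm y \<le> R \<longrightarrow> norm (F x + G x - (F y + G y)) \<le> K * norm (x - y)"
    by blast
qed

lemma lipb_uminus:
  assumes "lipb F"
  shows "lipb (\<lambda>x. - F x)"
  using assms unfolding lipb_def by (metis minus_diff_eq minus_diff_minus norm_minus_commute)

lemma lipb_diff:
  assumes "lipb F" "lipb G"
  shows "lipb (\<lambda>x. F x - G x)"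
  using lipb_add[OF assms(1) lipb_uminus[OF assms(2)]] by simp

lemma lipb_comp:
  assumes "lipb F" "lipb G"
  shows "lipb (\<lambda>x. G (F x))"
  unfolding lipb_def
proof
  fix R
  obtain M where M: "\<And>x. norm x \<le> R \<Longrightarrow> norm (F x) \<le> M" using lipb_bnd[OF assms(1)] by blast
  obtain K1 where K1: "K1 \<ge> 0" "\<And>x y. norm x \<le> R \<Longrightarrow> norm y \<le> R \<Longrightarrow> norm (F x - F y) \<le> K1 * norm (x - y)"
    using lipbD[OF assms(1)] by blast
  obtain K2 where K2: "K2 \<ge> 0" "\<And>x y. norm x \<le> M \<Longrightarrow> norm y \<le> M \<Longrightarrow> norm (G x - G y) \<le> K2 * norm (x - y)"
    using lipbD[OF assms(2)] by blast
  have "norm (G (F x) - G (F y)) \<le> (K2 * K1) * norm (x - y)" if "norm x \<le> R" "norm y \<le> R" for x y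
  proof -
    have "norm (G (F x) - G (F y)) \<le> K2 * norm (F x - F y)" using K2(2) M that by blast
    also have "\<dots> \<le> K2 * (K1 * norm (x - y))" using K1(2)[OF that] K2(1) by (rule mult_left_mono)
    finally show ?thesis by simp
  qed
  then show "\<exists>K. \<forall>x y. norm x \<le> R \<longrightarrow> norm y \<le> R \<longrightarrow> norm (G (F x) - G (F y)) \<le> K * norm (x - y)"
    by blast
qed

lemma lipb_scaleR:
  fixes a :: "'a::real_normed_vector \<Rightarrow> real"
  assumes "lipb a" "lipb F"
  shows "lipb (\<lambda>x. a x *\<^sub>R F x)"
  unfolding lipb_def
proof
  fix R
  obtain Ma where Ma: "\<And>x. norm x \<le> R \<Longrightarrow> norm (a x) \<le> Ma" using lipb_bnd[OF assms(1)] by blast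
  obtain MF where MF: "\<And>x. norm x \<le> R \<Longrightarrow> norm (F x) \<le> MF" using lipb_bnd[OF assms(2)] by blast
  obtain K1 where K1: "K1 \<ge> 0" "\<And>x y. norm x \<le> R \<Longrightarrow> norm y \<le> R \<Longrightarrow> norm (a x - a y) \<le> K1 * norm (x - y)"
    using lipbD[OF assms(1)] by blast
  obtain K2 where K2: "K2 \<ge> 0" "\<And>x y. norm x \<le> R \<Longrightarrow> norm y \<le> R \<Longrightarrow> norm (F x - F y) \<le> K2 * norm (x - y)"
    using lipbD[OF assms(2)] by blast
  have "norm (a x *\<^sub>R F x - a y *\<^sub>R F y) \<le> (\<bar>Ma\<bar> * K2 + \<bar>MF\<bar> * K1) * norm (x - y)"
    if "norm x \<le> R" "norm y \<le> R" for x y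
  proof -
    have "a x *\<^sub>R F x - a y *\<^sub>R F y = a x *\<^sub>R (F x - F y) + (a x - a y) *\<^sub>R F y"
      by (simp add: algebra_simps)
    then have "norm (a x *\<^sub>R F x - a y *\<^sub>R F y) \<le> \<bar>a x\<bar> * norm (F x - F y) + \<bar>a x - a y\<bar> * norm (F y)"
      by (metis norm_scaleR norm_triangle_ineq)
    also have "\<bar>a x\<bar> * norm (F x - F y) \<le> \<bar>Ma\<bar> * (K2 * norm (x - y))"
      using Ma[OF that(1)] K2(2)[OF that] by (intro mult_mono) auto
    also have "\<bar>a x - a y\<bar> * norm (F y) \<le> (K1 * norm (x - y)) * \<bar>MF\<bar>"
      using MF[OF that(2)] K1(2)[OF that] K1(1) by (intro mult_mono) auto
    finally show ?thesis by (simp add: algebra_simps)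
  qed
  then show "\<exists>K. \<forall>x y. norm x \<le> R \<longrightarrow> norm y \<le> R \<longrightarrow> norm (a x *\<^sub>R F x - a y *\<^sub>R F y) \<le> K * norm (x - y)"
    by blast
qed

lemma lipb_mult:
  fixes a b :: "'a::real_normed_vector \<Rightarrow> real"
  assumes "lipb a" "lipb b"
  shows "lipb (\<lambda>x. a x * b x)"
  using lipb_scaleR[OF assms] by simp

lemma lipb_inner:
  fixes F G :: "'a::real_normed_vector \<Rightarrow> 'b::real_inner"
  assumes "lipb F" "lipb G"
  shows "lipb (\<lambda>x. inner (F x) (G x))"
  unfolding lipb_def
proof
  fix R
  obtain MG where MG: "\<And>x. norm x \<le> R \<Longrightarrow> norm (G x) \<le> MG" using lipb_bnd[OF assms(2)] by blast
  obtain MF where MF: "\<And>x. norm x \<le> R \<Longrightarrow> norm (F x) \<le> MF" using lipb_bnd[OF assms(1)] by blast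
  obtain K1 where K1: "K1 \<ge> 0" "\<And>x y. norm x \<le> R \<Longrightarrow> norm y \<le> R \<Longrightarrow> norm (F x - F y) \<le> K1 * norm (x - y)"
    using lipbD[OF assms(1)] by blast
  obtain K2 where K2: "K2 \<ge> 0" "\<And>x y. norm x \<le> R \<Longrightarrow> norm y \<le> R \<Longrightarrow> norm (G x - G y) \<le> K2 * norm (x - y)"
    using lipbD[OF assms(2)] by blast
  have "norm (inner (F x) (G x) - inner (F y) (G y)) \<le> (\<bar>MF\<bar> * K2 + \<bar>MG\<bar> * K1) * norm (x - y)"
    if "norm x \<le> R" "norm y \<le> R" for x y
  proof -
    have "inner (F x) (G x) - inner (F y) (G y) = inner (F x) (G x - G y) + inner (F x - F y) (G y)"
      by (simp add: algebra_simps inner_diff_left inner_diff_right)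
    then have "norm (inner (F x) (G x) - inner (F y) (G y)) \<le> norm (F x) * norm (G x - G y) + norm (F x - F y) * norm (G y)"
      by (smt (verit) Cauchy_Schwarz_ineq2 real_norm_def)
    also have "norm (F x) * norm (G x - G y) \<le> \<bar>MF\<bar> * (K2 * norm (x - y))"
      using MF[OF that(1)] K2(2)[OF that] by (intro mult_mono) auto
    also have "norm (F x - F y) * norm (G y) \<le> (K1 * norm (x - y)) * \<bar>MG\<bar>"
      using MG[OF that(2)] K1(2)[OF that] K1(1) by (intro mult_mono) auto
    finally show ?thesis by (simp add: algebra_simps)
  qed
  then show "\<exists>K. \<forall>x y. norm x \<le> R \<longrightarrow> norm y \<le> R \<longrightarrow> norm (inner (F x) (G x) - inner (F y) (G y)) \<le> K * norm (x - y)"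
    by blast
qed

lemma lipb_locally:
  fixes F :: "'a::real_normed_vector \<Rightarrow> 'b::real_normed_vector"
  assumes "lipb F"
  shows "locally_lipschitz F"
  unfolding locally_lipschitz_def
proof
  fix z :: 'a
  obtain K where K: "K \<ge> 0" "\<And>x y. norm x \<le> norm z + 1 \<Longrightarrow> norm y \<le> norm z + 1 \<Longrightarrow> norm (F x - F y) \<le> K * norm (x - y)"
    using lipbD[OF assms] by blast
  have "norm x \<le> norm z + 1" if "x \<in> ball z 1" for x
    using that by (smt (verit) dist_norm mem_ball norm_triangle_sub norm_minus_commute)
  then have "K-lipschitz_on (ball z 1) F"
    unfolding lipschitz_on_def dist_norm using K by blast
  then show "\<exists>e>0. \<exists>L. L-lipschitz_on (ball z e) F" by (intro exI[of _ 1]) auto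
qed

lemma lipb_prox:
  fixes f :: "'a::euclidean_space \<Rightarrow> real"
  assumes cvx: "convex_on UNIV f"
    and der: "\<And>x. (f has_derivative (\<lambda>h. inner (g x) h)) (at x)"
    and "\<gamma> > 0"
  shows "lipb (prox \<gamma> f)"
  unfolding lipb_def using prox_nonexp[OF assms] by (metis mult_1)

lemma lipb_fun:
  fixes f :: "'a::real_inner \<Rightarrow> real"
  assumes cvx: "convex_on UNIV f"
    and der: "\<And>x. (f has_derivative (\<lambda>h. inner (g x) h)) (at x)"
    and lg: "lipb g"
  shows "lipb f"
  unfolding lipb_def
proof
  fix R
  obtain M where M: "\<And>x. norm x \<le> R \<Longrightarrow> norm (g x) \<le> M" using lipb_bnd[OF lg] by blast
  have "norm (f x - f y) \<le> M * norm (x - y)" if "norm x \<le> R" "norm y \<le> R" for x y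
  proof -
    have a: "f x + inner (g x) (y - x) \<le> f y" "f y + inner (g y) (x - y) \<le> f x"
      using tangent_ineq[OF cvx der] by blast+
    have b: "inner (g x) (y - x) \<ge> - (norm (g x) * norm (y - x))"
      using norm_cauchy_schwarz[of "g x" "x - y"] by (simp add: norm_minus_commute inner_diff_right)
    have c: "inner (g y) (x - y) \<ge> - (norm (g y) * norm (x - y))"
      using norm_cauchy_schwarz[of "g y" "y - x"] by (simp add: norm_minus_commute inner_diff_right)
    have "norm (g x) * norm (y - x) \<le> M * norm (x - y)" using M[OF that(1)]
      by (simp add: mult_right_mono norm_minus_commute)
    moreover have "norm (g y) * norm (x - y) \<le> M * norm (x - y)" using M[OF that(2)]
      by (simp add: mult_right_mono)
    ultimately show ?thesis using a b c by (simp add: abs_le_iff)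
  qed
  then show "\<exists>K. \<forall>x y. norm x \<le> R \<longrightarrow> norm y \<le> R \<longrightarrow> norm (f x - f y) \<le> K * norm (x - y)" by blast
qed



lemma quad_low:
  fixes t \<delta> P :: real
  assumes "\<delta> > 0"
  shows "\<delta> * t\<^sup>2 - P * t \<ge> - (P\<^sup>2 / (4 * \<delta>))"
proof -
  have "0 \<le> (2 * \<delta> * t - P)\<^sup>2 / (4 * \<delta>)" using assms by simp
  also have "(2 * \<delta> * t - P)\<^sup>2 / (4 * \<delta>) = \<delta> * t\<^sup>2 - P * t + P\<^sup>2 / (4 * \<delta>)"
    using assms by (simp add: field_simps power2_eq_square)
  finally show ?thesis by simp
qed

lemma env_lip:
  fixes h :: "'a::real_inner \<Rightarrow> ereal"
  assumes ninf: "\<And>y. h y \<noteq> -\<infinity>" and y0: "h y0 \<noteq> \<infinity>"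
    and lb: "\<And>y. ereal (c0 - B * norm y - K * (norm y)\<^sup>2) \<le> h y"
    and Kb: "K < \<beta>" and B0: "B \<ge> 0"
  defines "E \<equiv> \<lambda>C v. INF y. h y + ereal (C + inner y v + \<beta> * (norm y)\<^sup>2)"
  shows "\<bar>E C v\<bar> \<noteq> \<infinity>"
    and "\<exists>M. \<forall>C v C' v'. \<bar>C\<bar> \<le> R \<longrightarrow> norm v \<le> R \<longrightarrow> \<bar>C'\<bar> \<le> R \<longrightarrow> norm v' \<le> R \<longrightarrow>
          \<bar>real_of_ereal (E C v) - real_of_ereal (E C' v')\<bar> \<le> M * (\<bar>C - C'\<bar> + norm (v - v'))"
proof -
  define \<delta> where "\<delta> = \<beta> - K"
  have \<delta>0: "\<delta> > 0" using Kb unfolding \<delta>_def by simp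
  obtain r0 where r0: "h y0 = ereal r0" using y0 ninf[of y0] by (cases "h y0") auto
  have lbr: "c0 - B * norm y - K * (norm y)\<^sup>2 \<le> r" if "h y = ereal r" for y r
    using lb[of y] that by simp
  have cs: "inner y v \<ge> - (norm y * norm v)" for y v :: 'a
    using norm_cauchy_schwarz[of y "- v"] by simp
  have up: "E C v \<le> ereal (r0 + C + inner y0 v + \<beta> * (norm y0)\<^sup>2)" for C v
    unfolding E_def by (rule INF_lower2[of y0]) (auto simp: r0)
  have fin: "\<bar>E C v\<bar> \<noteq> \<infinity>" for C v
  proof -
    let ?P = "B + norm v"
    have "ereal (c0 + C - ?P\<^sup>2 / (4 * \<delta>)) \<le> E C v"
      unfolding E_def
    proof (rule INF_greatest)
      fix y assume "y \<in> (UNIV :: 'a set)"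
      show "ereal (c0 + C - ?P\<^sup>2 / (4 * \<delta>)) \<le> h y + ereal (C + inner y v + \<beta> * (norm y)\<^sup>2)"
      proof (cases "h y")
        case (real r)
        have "c0 - B * norm y - K * (norm y)\<^sup>2 \<le> r" by (rule lbr[OF real])
        moreover have "\<delta> * (norm y)\<^sup>2 - ?P * norm y \<ge> - (?P\<^sup>2 / (4 * \<delta>))" by (rule quad_low[OF \<delta>0])
        moreover note cs[of y v]
        ultimately show ?thesis using real unfolding \<delta>_def by (simp add: algebra_simps)
      qed (use ninf in auto)
    qed
    then show ?thesis using up[of C v] by auto
  qed
  show "\<bar>E C v\<bar> \<noteq> \<infinity>" by (rule fin)
  show "\<exists>M. \<forall>C v C' v'. \<bar>C\<bar> \<le> R \<longrightarrow> norm v \<le> R \<longrightarrow> \<bar>C'\<bar> \<le> R \<longrightarrow> norm v' \<le> R \<longrightarrow>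
          \<bar>real_of_ereal (E C v) - real_of_ereal (E C' v')\<bar> \<le> M * (\<bar>C - C'\<bar> + norm (v - v'))"
  proof (cases "R \<ge> 0")
    case False
    then show ?thesis by (smt (verit) norm_ge_zero)
  next
    case True
    define U where "U = r0 + R + norm y0 * R + \<beta> * (norm y0)\<^sup>2"
    define \<rho> where "\<rho> = max 1 ((\<bar>U - c0 + R\<bar> + B + R) / \<delta>)"
    have \<rho>1: "\<rho> \<ge> 1" unfolding \<rho>_def by simp
    have claim: "E C v \<le> h y + ereal (C' + inner y v' + \<beta> * (norm y)\<^sup>2) + ereal (\<bar>C - C'\<bar> + \<rho> * norm (v - v'))"
      if b: "\<bar>C\<bar> \<le> R" "norm v \<le> R" "\<bar>C'\<bar> \<le> R" "norm v' \<le> R" for C v C' v' y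
    proof (cases "h y")
      case PInf then show ?thesis by simp
    next
      case MInf then show ?thesis using ninf by simp
    next
      case (real r)
      show ?thesis
      proof (cases "norm y \<le> \<rho>")
        case True
        have A: "E C v \<le> ereal (r + (C + inner y v + \<beta> * (norm y)\<^sup>2))"
        proof -
          have "E C v \<le> h y + ereal (C + inner y v + \<beta> * (norm y)\<^sup>2)"
            unfolding E_def by (rule INF_lower) simp
          then show ?thesis using real by simp
        qed
        have i: "inner y v - inner y v' \<le> \<rho> * norm (v - v')"
        proof -
          have "inner y v - inner y v' = inner y (v - v')" by (simp add: inner_diff_right)
          also have "\<dots> \<le> norm y * norm (v - v')" by (rule norm_cauchy_schwarz)
          also have "\<dots> \<le> \<rho> * norm (v - v')" using True by (simp add: mult_right_mono)
          finally show ?thesis .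
        qed
        have "r + (C + inner y v + \<beta> * (norm y)\<^sup>2) \<le> r + (C' + inner y v' + \<beta> * (norm y)\<^sup>2) + (\<bar>C - C'\<bar> + \<rho> * norm (v - v'))"
          using i abs_ge_self[of "C - C'"] by linarith
        then have "ereal (r + (C + inner y v + \<beta> * (norm y)\<^sup>2)) \<le> ereal (r + (C' + inner y v' + \<beta> * (norm y)\<^sup>2) + (\<bar>C - C'\<bar> + \<rho> * norm (v - v')))"
          by (simp only: ereal_less_eq(3))
        with A have "E C v \<le> ereal (r + (C' + inner y v' + \<beta> * (norm y)\<^sup>2) + (\<bar>C - C'\<bar> + \<rho> * norm (v - v')))"
          by (rule order_trans)
        then show ?thesis using real by simp
      next
        case False
        let ?t = "norm y"
        have "E C v \<le> ereal U"
        proof -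
          have "inner y0 v \<le> norm y0 * R"
            using norm_cauchy_schwarz[of y0 v] b(2) by (smt (verit) mult_left_mono norm_ge_zero)
          then have "r0 + C + inner y0 v + \<beta> * (norm y0)\<^sup>2 \<le> U" using b(1) unfolding U_def by linarith
          then have "ereal (r0 + C + inner y0 v + \<beta> * (norm y0)\<^sup>2) \<le> ereal U" by (simp only: ereal_less_eq(3))
          with up[of C v] show ?thesis by (rule order_trans)
        qed
        moreover have "U \<le> r + C' + inner y v' + \<beta> * ?t\<^sup>2"
        proof -
          have t1: "1 \<le> ?t" using False \<rho>1 by simp
          have "(\<bar>U - c0 + R\<bar> + B + R) / \<delta> \<le> ?t" using False unfolding \<rho>_def by simp
          then have "\<delta> * ?t \<ge> (B + R) + \<bar>U - c0 + R\<bar>" using \<delta>0 by (simp add: field_simps)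
          from quad_big[OF t1 this] have q: "\<delta> * ?t\<^sup>2 - (B + R) * ?t \<ge> \<bar>U - c0 + R\<bar>" by simp
          have "c0 - B * ?t - K * ?t\<^sup>2 \<le> r" by (rule lbr[OF real])
          moreover have "inner y v' \<ge> - (?t * R)"
            using cs[of y v'] b(4) by (smt (verit) mult_left_mono norm_ge_zero)
          ultimately show ?thesis using q b(3) unfolding \<delta>_def by (simp add: algebra_simps)
        qed
        moreover have "\<bar>C - C'\<bar> + \<rho> * norm (v - v') \<ge> 0" using \<rho>1 by simp
        ultimately have "U \<le> r + (C' + inner y v' + \<beta> * (norm y)\<^sup>2) + (\<bar>C - C'\<bar> + \<rho> * norm (v - v'))"
          by linarith
        then have "ereal U \<le> ereal (r + (C' + inner y v' + \<beta> * (norm y)\<^sup>2) + (\<bar>C - C'\<bar> + \<rho> * norm (v - v')))"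
          by (simp only: ereal_less_eq(3))
        with \<open>E C v \<le> ereal U\<close> have "E C v \<le> ereal (r + (C' + inner y v' + \<beta> * (norm y)\<^sup>2) + (\<bar>C - C'\<bar> + \<rho> * norm (v - v')))"
          by (rule order_trans)
        then show ?thesis using real by simp
      qed
    qed
    have half: "real_of_ereal (E C v) - real_of_ereal (E C' v') \<le> \<rho> * (\<bar>C - C'\<bar> + norm (v - v'))"
      if b: "\<bar>C\<bar> \<le> R" "norm v \<le> R" "\<bar>C'\<bar> \<le> R" "norm v' \<le> R" for C v C' v'
    proof -
      define e where "e = real_of_ereal (E C v)"
      define e' where "e' = real_of_ereal (E C' v')"
      define D where "D = \<bar>C - C'\<bar> + \<rho> * norm (v - v')"
      have Ee: "E C v = ereal e" using fin[of C v] unfolding e_def by (cases "E C v") auto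
      have Ee': "E C' v' = ereal e'" using fin[of C' v'] unfolding e'_def by (cases "E C' v'") auto
      have "ereal (e - D) \<le> E C' v'"
        unfolding E_def
      proof (rule INF_greatest)
        fix y assume "y \<in> (UNIV :: 'a set)"
        have c: "ereal e \<le> h y + ereal (C' + inner y v' + \<beta> * (norm y)\<^sup>2) + ereal D"
          using claim[OF b, of y] Ee unfolding D_def by simp
        show "ereal (e - D) \<le> h y + ereal (C' + inner y v' + \<beta> * (norm y)\<^sup>2)"
        proof (cases "h y")
          case (real r) then show ?thesis using c by simp
        qed (use ninf in auto)
      qed
      then have "e - D \<le> e'" using Ee' by simp
      moreover have "D \<le> \<rho> * (\<bar>C - C'\<bar> + norm (v - v'))"
        unfolding D_def using mult_right_mono[OF \<rho>1, of "\<bar>C - C'\<bar>"] by (simp add: distrib_left)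
      ultimately show ?thesis unfolding e_def e'_def by simp
    qed
    have "\<bar>real_of_ereal (E C v) - real_of_ereal (E C' v')\<bar> \<le> \<rho> * (\<bar>C - C'\<bar> + norm (v - v'))"
      if b: "\<bar>C\<bar> \<le> R" "norm v \<le> R" "\<bar>C'\<bar> \<le> R" "norm v' \<le> R" for C v C' v'
      using half[OF b] half[OF b(3,4,1,2)] by (simp add: abs_minus_commute norm_minus_commute abs_le_iff)
    then show ?thesis by blast
  qed
qed



lemma norm_diff_sq: "(norm (y - x))\<^sup>2 = inner y y - 2 * inner y x + inner (x::'a::real_inner) x"
  by (simp add: power2_norm_eq_inner inner_diff_left inner_diff_right inner_commute)

lemma ryu_expand:
  fixes x1 x2 y g1x g2x :: "'a::real_inner"
  assumes "\<gamma> > 0"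
  shows "(f1x + inner (y - x1) g1x + \<alpha> / (2 * \<gamma>) * (norm (y - x1))\<^sup>2)
       + (f2x + inner (y - x2) g2x + (1 - \<alpha>) / (2 * \<gamma>) * (norm (y - x2))\<^sup>2)
     = (f1x - inner x1 g1x + \<alpha> / (2 * \<gamma>) * inner x1 x1 + f2x - inner x2 g2x + (1 - \<alpha>) / (2 * \<gamma>) * inner x2 x2)
       + inner y (g1x + g2x - (\<alpha> / \<gamma>) *\<^sub>R x1 - ((1 - \<alpha>) / \<gamma>) *\<^sub>R x2) + 1 / (2 * \<gamma>) * (norm y)\<^sup>2"
  using assms
  by (simp add: norm_diff_sq power2_norm_eq_inner inner_diff_left inner_diff_right inner_add_right
      inner_commute field_simps)

theorem proposition2:
  fixes f1 f2 :: "'a::euclidean_space \<Rightarrow> real"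
    and g1 g2 :: "'a \<Rightarrow> 'a"
    and f3 :: "'a \<Rightarrow> ereal"
    and L1 L2 \<alpha> \<gamma> :: real
  assumes "convex_on UNIV f1" and "convex_on UNIV f2"
    and "\<And>x. (f1 has_derivative (\<lambda>h. inner (g1 x) h)) (at x)"
    and "\<And>x. (f2 has_derivative (\<lambda>h. inner (g2 x) h)) (at x)"
    and "L1 > 0" and "L2 > 0"
    and "L1-lipschitz_on UNIV g1" and "L2-lipschitz_on UNIV g2"
    and "proper_ereal f3" and "lsc_ereal f3"
    and "\<exists>x. \<forall>y. ereal (f1 x) + ereal (f2 x) + f3 x \<le> ereal (f1 y) + ereal (f2 y) + f3 y"
    and "\<alpha> > 0" and "\<gamma> > 0" and "\<gamma> < 1 / (L1 + L2)"
  shows "(\<forall>z1 z2. \<bar>ryu_envelope f1 g1 f2 g2 f3 \<alpha> \<gamma> z1 z2\<bar> \<noteq> \<infinity>)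
    \<and> locally_lipschitz (\<lambda>(z1, z2). real_of_ereal (ryu_envelope f1 g1 f2 g2 f3 \<alpha> \<gamma> z1 z2))"
proof -
  note cvx1 = assms(1) and cvx2 = assms(2) and der1 = assms(3) and der2 = assms(4)
  note lip1 = assms(7) and lip2 = assms(8)
  have \<gamma>0: "\<gamma> > 0" and \<alpha>0: "\<alpha> > 0" using assms by auto
  have \<gamma>\<alpha>: "\<gamma> / \<alpha> > 0" using \<gamma>0 \<alpha>0 by simp
  have ninf: "\<And>y. f3 y \<noteq> -\<infinity>" using assms(9) unfolding proper_ereal_def by blast
  obtain y0 where y0: "f3 y0 \<noteq> \<infinity>" using assms(9) unfolding proper_ereal_def by blast
  obtain xs where xs: "\<And>y. ereal (f1 xs) + ereal (f2 xs) + f3 xs \<le> ereal (f1 y) + ereal (f2 y) + f3 y"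
    using assms(11) by blast
  obtain r3 where r3: "f3 xs = ereal r3"
  proof (cases "f3 xs")
    case (real r) then show ?thesis using that by blast
  next
    case PInf
    obtain r where "f3 y0 = ereal r" using y0 ninf[of y0] by (cases "f3 y0") auto
    then show ?thesis using xs[of y0] PInf by simp
  next
    case MInf then show ?thesis using ninf by simp
  qed
  define B where "B = norm (g1 0) + norm (g2 0)"
  define K where "K = (L1 + L2) / 2"
  define c0 where "c0 = f1 xs + f2 xs + r3 - f1 0 - f2 0"
  define \<beta> where "\<beta> = 1 / (2 * \<gamma>)"
  have B0: "B \<ge> 0" unfolding B_def by simp
  have Kb: "K < \<beta>"
  proof -
    have "\<gamma> * (L1 + L2) < 1" using assms(5,6,14) by (simp add: field_simps)
    then show ?thesis unfolding K_def \<beta>_def using \<gamma>0 by (simp add: field_simps)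
  qed
  have lb: "ereal (c0 - B * norm y - K * (norm y)\<^sup>2) \<le> f3 y" for y
  proof (cases "f3 y")
    case (real r)
    have m: "f1 xs + f2 xs + r3 \<le> f1 y + f2 y + r" using xs[of y] r3 real by simp
    have d1: "f1 y \<le> f1 0 + inner (g1 0) (y - 0) + L1 / 2 * (norm (y - 0))\<^sup>2"
      by (rule descent_ineq[OF der1 lip1])
    have d2: "f2 y \<le> f2 0 + inner (g2 0) (y - 0) + L2 / 2 * (norm (y - 0))\<^sup>2"
      by (rule descent_ineq[OF der2 lip2])
    have i1: "inner (g1 0) y \<le> norm (g1 0) * norm y" by (rule norm_cauchy_schwarz)
    have i2: "inner (g2 0) y \<le> norm (g2 0) * norm y" by (rule norm_cauchy_schwarz)
    have "c0 - B * norm y - K * (norm y)\<^sup>2 \<le> r"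
    proof -
      have k: "K * (norm y)\<^sup>2 = L1 / 2 * (norm y)\<^sup>2 + L2 / 2 * (norm y)\<^sup>2"
        unfolding K_def by (simp add: field_simps)
      have b: "B * norm y = norm (g1 0) * norm y + norm (g2 0) * norm y"
        unfolding B_def by (simp add: field_simps)
      show ?thesis using m d1 d2 i1 i2 k b unfolding c0_def by simp
    qed
    then show ?thesis using real by simp
  qed (use ninf in auto)
  define E where "E = (\<lambda>C v. INF y. f3 y + ereal (C + inner y v + \<beta> * (norm y)\<^sup>2))"
  have Efin: "\<bar>E C v\<bar> \<noteq> \<infinity>" for C v
    unfolding E_def by (rule env_lip(1)[OF ninf y0 lb Kb B0])
  have Elip: "\<exists>M. \<forall>C v C' v'. \<bar>C\<bar> \<le> R \<longrightarrow> norm v \<le> R \<longrightarrow> \<bar>C'\<bar> \<le> R \<longrightarrow> norm v' \<le> R \<longrightarrow>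
          \<bar>real_of_ereal (E C v) - real_of_ereal (E C' v')\<bar> \<le> M * (\<bar>C - C'\<bar> + norm (v - v'))" for R
    unfolding E_def by (rule env_lip(2)[OF ninf y0 lb Kb B0])
  define X1 where "X1 = (\<lambda>w::'a \<times> 'a. prox \<gamma> f1 (fst w))"
  define X2 where "X2 = (\<lambda>w::'a \<times> 'a. prox (\<gamma> / \<alpha>) f2 (snd w /\<^sub>R \<alpha> + X1 w))"
  define W where "W = (\<lambda>w. f1 (X1 w) - inner (X1 w) (g1 (X1 w)) + \<alpha> / (2 * \<gamma>) * inner (X1 w) (X1 w)
      + f2 (X2 w) - inner (X2 w) (g2 (X2 w)) + (1 - \<alpha>) / (2 * \<gamma>) * inner (X2 w) (X2 w))"
  define V where "V = (\<lambda>w. g1 (X1 w) + g2 (X2 w) - (\<alpha> / \<gamma>) *\<^sub>R X1 w - ((1 - \<alpha>) / \<gamma>) *\<^sub>R X2 w)"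
  have ryu: "ryu_envelope f1 g1 f2 g2 f3 \<alpha> \<gamma> z1 z2 = E (W (z1, z2)) (V (z1, z2))" for z1 z2
  proof -
    have "f3 y + ereal (f1 a + inner (y - a) (g1 a) + \<alpha> / (2 * \<gamma>) * (norm (y - a))\<^sup>2)
           + ereal (f2 b + inner (y - b) (g2 b) + (1 - \<alpha>) / (2 * \<gamma>) * (norm (y - b))\<^sup>2)
        = f3 y + ereal ((f1 a - inner a (g1 a) + \<alpha> / (2 * \<gamma>) * inner a a + f2 b - inner b (g2 b) + (1 - \<alpha>) / (2 * \<gamma>) * inner b b)
           + inner y (g1 a + g2 b - (\<alpha> / \<gamma>) *\<^sub>R a - ((1 - \<alpha>) / \<gamma>) *\<^sub>R b) + \<beta> * (norm y)\<^sup>2)" for y a b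
      unfolding \<beta>_def ryu_expand[OF \<gamma>0, symmetric] by (simp add: add.assoc)
    then show ?thesis
      unfolding ryu_envelope_def E_def W_def V_def X1_def X2_def Let_def by simp
  qed
  have part1: "\<forall>z1 z2. \<bar>ryu_envelope f1 g1 f2 g2 f3 \<alpha> \<gamma> z1 z2\<bar> \<noteq> \<infinity>"
    using ryu Efin by simp
  have lg1: "lipb g1" by (rule lipb_lipschitz[OF lip1])
  have lg2: "lipb g2" by (rule lipb_lipschitz[OF lip2])
  have lf1: "lipb f1" by (rule lipb_fun[OF cvx1 der1 lg1])
  have lf2: "lipb f2" by (rule lipb_fun[OF cvx2 der2 lg2])
  have lX1: "lipb X1" unfolding X1_def by (rule lipb_comp[OF lipb_fst lipb_prox[OF cvx1 der1 \<gamma>0]])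
  have "lipb (\<lambda>w::'a \<times> 'a. snd w /\<^sub>R \<alpha> + X1 w)"
    by (rule lipb_add[OF lipb_scaleR[OF lipb_const lipb_snd] lX1])
  then have lX2: "lipb X2" unfolding X2_def by (rule lipb_comp[OF _ lipb_prox[OF cvx2 der2 \<gamma>\<alpha>]])
  have a1: "lipb (\<lambda>w. f1 (X1 w))" by (rule lipb_comp[OF lX1 lf1])
  have a2: "lipb (\<lambda>w. g1 (X1 w))" by (rule lipb_comp[OF lX1 lg1])
  have a3: "lipb (\<lambda>w. f2 (X2 w))" by (rule lipb_comp[OF lX2 lf2])
  have a4: "lipb (\<lambda>w. g2 (X2 w))" by (rule lipb_comp[OF lX2 lg2])
  have lW: "lipb W" unfolding W_def
    by (intro lipb_add lipb_diff lipb_mult lipb_inner lipb_const a1 a2 a3 a4 lX1 lX2)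
  have lV: "lipb V" unfolding V_def
    by (intro lipb_add lipb_diff lipb_scaleR lipb_const a1 a2 a3 a4 lX1 lX2)
  have lF: "lipb (\<lambda>w. real_of_ereal (E (W w) (V w)))"
    unfolding lipb_def
  proof
    fix R
    obtain MW where MW: "\<And>x. norm x \<le> R \<Longrightarrow> norm (W x) \<le> MW" using lipb_bnd[OF lW] by blast
    obtain MV where MV: "\<And>x. norm x \<le> R \<Longrightarrow> norm (V x) \<le> MV" using lipb_bnd[OF lV] by blast
    obtain KW where KW: "KW \<ge> 0" "\<And>x y. norm x \<le> R \<Longrightarrow> norm y \<le> R \<Longrightarrow> norm (W x - W y) \<le> KW * norm (x - y)"
      using lipbD[OF lW] by blast
    obtain KV where KV: "KV \<ge> 0" "\<And>x y. norm x \<le> R \<Longrightarrow> norm y \<le> R \<Longrightarrow> norm (V x - V y) \<le> KV * norm (x - y)"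
      using lipbD[OF lV] by blast
    obtain M where M: "\<And>C v C' v'. \<bar>C\<bar> \<le> max MW MV \<Longrightarrow> norm v \<le> max MW MV \<Longrightarrow> \<bar>C'\<bar> \<le> max MW MV \<Longrightarrow> norm v' \<le> max MW MV \<Longrightarrow>
          \<bar>real_of_ereal (E C v) - real_of_ereal (E C' v')\<bar> \<le> M * (\<bar>C - C'\<bar> + norm (v - v'))"
      using Elip[of "max MW MV"] by blast
    have "norm (real_of_ereal (E (W x) (V x)) - real_of_ereal (E (W y) (V y))) \<le> (max M 0 * (KW + KV)) * norm (x - y)"
      if xy: "norm x \<le> R" "norm y \<le> R" for x y
    proof -
      have "\<bar>real_of_ereal (E (W x) (V x)) - real_of_ereal (E (W y) (V y))\<bar> \<le> M * (\<bar>W x - W y\<bar> + norm (V x - V y))"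
        using MW[of x] MW[of y] MV[of x] MV[of y] xy by (intro M) auto
      also have "\<dots> \<le> max M 0 * (\<bar>W x - W y\<bar> + norm (V x - V y))"
        by (intro mult_right_mono) auto
      also have "\<dots> \<le> max M 0 * (KW * norm (x - y) + KV * norm (x - y))"
        using KW(2)[OF xy] KV(2)[OF xy] by (intro mult_left_mono add_mono) auto
      finally show ?thesis by (simp add: algebra_simps)
    qed
    then show "\<exists>K. \<forall>x y. norm x \<le> R \<longrightarrow> norm y \<le> R \<longrightarrow>
        norm (real_of_ereal (E (W x) (V x)) - real_of_ereal (E (W y) (V y))) \<le> K * norm (x - y)"
      by blast
  qed
  have "(\<lambda>(z1, z2). real_of_ereal (ryu_envelope f1 g1 f2 g2 f3 \<alpha> \<gamma> z1 z2)) = (\<lambda>w. real_of_ereal (E (W w) (V w)))"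
    by (auto simp: ryu)
  then have "locally_lipschitz (\<lambda>(z1, z2). real_of_ereal (ryu_envelope f1 g1 f2 g2 f3 \<alpha> \<gamma> z1 z2))"
    using lipb_locally[OF lF] by simp
  with part1 show ?thesis by blast
qed


end
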